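(* Let $\mathcal{T}$ be a tiling of $\mathbb{R}^d$ with finite local complexity that is repetitive. Let $\mathcal{P}$ be a nonempty finite $\mathcal{T}$-legal patch and $\{b_1,\dots,b_d\}$ a basis of $\mathbb{R}^d$. The following are equivalent: (1) for each $n>0$, the set $\bigcup_{(l_1,\dots,l_d)\in\{1,\dots,n\}^d}\left(\mathcal{P}+\sum_{i=1}^d l_ib_i\right)$ is a $\mathcal{T}$-legal patch; (2) the set $\bigcup_{(l_1,\dots,l_d)\in\mathbb{Z}^d}\left(\mathcal{P}+\sum_{i=1}^d l_ib_i\right)$ is $\mathcal{S}$-legal for every $\mathcal{S}\in X_{\mathcal{T}}$.
   Context: A tile in $\mathbb{R}^d$ is a compact set equal to the closure of its interior, possibly labeled from a finite set. A patch is a (possibly infinite) set of tiles with pairwise disjoint interiors; a tiling is a patch whose support is $\mathbb{R}^d$; $\mathcal{P}+x=\{T+x:T\in\mathcal{P}\}$. A patch $\mathcal{P}$ is $\mathcal{S}$-legal if $\mathcal{P}+y\subset\mathcal{S}$ for some $y\in\mathbb{R}^d$. $\mathcal{P}\sqcap S=\{T\in\mathcal{P}:\operatorname{supp}T\cap S\neq\emptyset\}$. $\mathcal{T}$ has finite local complexity if for each compact $K$ the set $\{\mathcal{T}\sqcap(K+x):x\in\mathbb{R}^d\}$ is finite up to translation, and is repetitive if for every finite $\mathcal{T}$-legal patch $\mathcal{P}$ there is $R>0$ such that every ball of radius $R$ contains the support of some translate $\mathcal{P}+x\subset\mathcal{T}$. The local matching metric: $\rho(\mathcal{P}_1,\mathcal{P}_2)$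 is the infimum of $\varepsilon\in(0,1/\sqrt2)$ for which there are $x_1,x_2$ with $\|x_i\|\le\varepsilon$ and $(\mathcal{P}_1+x_1)\sqcap B_{1/\varepsilon}=(\mathcal{P}_2+x_2)\sqcap B_{1/\varepsilon}$, or $1/\sqrt2$ if there are none. The hull $X_{\mathcal{T}}$ is the closure of $\{\mathcal{T}+x\}$ in this metric. *)

theory Defs
  imports "HOL-Analysis.Analysis"
begin

type_synonym ('n, 'l) tile = "(real^'n) set \<times> 'l"

definition is_tile :: "('n::finite, 'l) tile \<Rightarrow> bool" where
  "is_tile T \<longleftrightarrow> compact (fst T) \<and> fst T \<noteq> {} \<and> closure (interior (fst T)) = fst T"

definition tile_translate :: "('n::finite, 'l) tile \<Rightarrow> real^'n \<Rightarrow> ('n, 'l) tile" where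
  "tile_translate T x = ((\<lambda>y. y + x) ` fst T, snd T)"

definition patch_translate :: "('n::finite, 'l) tile set \<Rightarrow> real^'n \<Rightarrow> ('n, 'l) tile set" where
  "patch_translate P x = (\<lambda>T. tile_translate T x) ` P"

definition is_patch :: "('n::finite, 'l) tile set \<Rightarrow> bool" where
  "is_patch P \<longleftrightarrow> (\<forall>T\<in>P. is_tile T) \<and>
     (\<forall>T1\<in>P. \<forall>T2\<in>P. T1 \<noteq> T2 \<longrightarrow> interior (fst T1) \<inter> interior (fst T2) = {})"

definition supp :: "('n::finite, 'l) tile set \<Rightarrow> (real^'n) set" where
  "supp P = (\<Union>T\<in>P. fst T)"

definition is_tiling :: "('n::finite, 'l) tile set \<Rightarrow> bool" where
  "is_tiling P \<longleftrightarrow> is_patch P \<and> supp P = UNIV"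

definition legal :: "('n::finite, 'l) tile set \<Rightarrow> ('n, 'l) tile set \<Rightarrow> bool" where
  "legal S P \<longleftrightarrow> (\<exists>y. patch_translate P y \<subseteq> S)"

definition patch_restrict :: "('n::finite, 'l) tile set \<Rightarrow> (real^'n) set \<Rightarrow> ('n, 'l) tile set" where
  "patch_restrict P K = {T \<in> P. fst T \<inter> K \<noteq> {}}"

definition finite_local_complexity :: "('n::finite, 'l) tile set \<Rightarrow> bool" where
  "finite_local_complexity \<T> \<longleftrightarrow>
     (\<forall>K. compact K \<longrightarrow> (\<exists>F. finite F \<and>
        (\<forall>x. \<exists>Q\<in>F. \<exists>z. patch_restrict \<T> ((\<lambda>y. y + x) ` K) = patch_translate Q z)))"

definition repetitive :: "('n::finite, 'l) tile set \<Rightarrow> bool" where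
  "repetitive \<T> \<longleftrightarrow>
     (\<forall>P. finite P \<and> is_patch P \<and> legal \<T> P \<longrightarrow>
        (\<exists>R>0. \<forall>c. \<exists>x. patch_translate P x \<subseteq> \<T> \<and> supp (patch_translate P x) \<subseteq> cball c R))"

definition rho :: "('n::finite, 'l) tile set \<Rightarrow> ('n, 'l) tile set \<Rightarrow> real" where
  "rho P1 P2 = Inf ({e. 0 < e \<and> e < 1 / sqrt 2 \<and>
       (\<exists>x1 x2. norm x1 \<le> e \<and> norm x2 \<le> e \<and>
          patch_restrict (patch_translate P1 x1) (ball 0 (1/e)) =
          patch_restrict (patch_translate P2 x2) (ball 0 (1/e)))} \<union> {1 / sqrt 2})"

definition hull_of :: "('n::finite, 'l) tile set \<Rightarrow> ('n, 'l) tile set set" where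
  "hull_of \<T> = {S. \<forall>e>0. \<exists>x. rho S (patch_translate \<T> x) < e}"

end

theory Submission
  imports Defs
begin

lemma tt_fst: "fst (tile_translate T x) = (\<lambda>y. y + x) ` fst T"
  by (simp add: tile_translate_def)

lemma tt_snd: "snd (tile_translate T x) = snd T"
  by (simp add: tile_translate_def)

lemma tt_add: "tile_translate (tile_translate T a) c = tile_translate T (a + c)"
  by (simp add: tile_translate_def image_image add.assoc)

lemma tt_0: "tile_translate T 0 = T"
  by (simp add: tile_translate_def)

lemma tt_inj: "tile_translate T a = tile_translate T' a \<longleftrightarrow> T = T'"
  by (metis tt_add tt_0 add.right_inverse)

lemma mem_pt: "X \<in> patch_translate P a \<longleftrightarrow> tile_translate X (-a) \<in> P"
  unfolding patch_translate_def
  by (metis (no_types, lifting) image_iff tt_add tt_0 add.right_inverse add.left_inverse)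

lemma tt_mem_pt: "tile_translate X a \<in> patch_translate P a \<longleftrightarrow> X \<in> P"
  by (simp add: mem_pt tt_add tt_0)

lemma pt_add: "patch_translate (patch_translate P a) c = patch_translate P (a + c)"
  by (simp add: patch_translate_def image_image tt_add)

lemma pt_0: "patch_translate P 0 = P"
  by (simp add: patch_translate_def tt_0)

lemma img_transl: "(\<lambda>y. y + a) ` S = (+) (a::'a::real_normed_vector) ` S"
  by (metis add.commute)

lemma interior_transl: "interior ((\<lambda>y. y + a) ` S) = (\<lambda>y. y + a) ` interior (S::'a::real_normed_vector set)"
  by (simp only: img_transl interior_translation)

lemma closure_transl: "closure ((\<lambda>y. y + a) ` S) = (\<lambda>y. y + a) ` closure (S::'a::real_normed_vector set)"
  by (simp only: img_transl closure_translation)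

lemma compact_transl: "compact S \<Longrightarrow> compact ((\<lambda>y. y + a) ` (S::'a::real_normed_vector set))"
  by (simp only: img_transl compact_translation)

lemma interior_tt: "interior (fst (tile_translate T a)) = (\<lambda>y. y + a) ` interior (fst T)"
  by (simp add: tt_fst interior_transl)

lemma closure_tt: "closure (fst (tile_translate T a)) = (\<lambda>y. y + a) ` closure (fst T)"
  by (simp add: tt_fst closure_transl)

lemma is_tile_tt: "is_tile T \<Longrightarrow> is_tile (tile_translate T a)"
  unfolding is_tile_def
proof (elim conjE, intro conjI)
  assume "compact (fst T)" "fst T \<noteq> {}" "closure (interior (fst T)) = fst T"
  show "compact (fst (tile_translate T a))"
    using \<open>compact (fst T)\<close> by (simp add: tt_fst compact_transl)
  show "fst (tile_translate T a) \<noteq> {}" using \<open>fst T \<noteq> {}\<close> by (simp add: tt_fst)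
  show "closure (interior (fst (tile_translate T a))) = fst (tile_translate T a)"
    using \<open>closure (interior (fst T)) = fst T\<close>
    by (simp add: tt_fst interior_transl closure_transl)
qed

lemma interior_tt_Int: "interior (fst (tile_translate X a)) \<inter> interior (fst (tile_translate Y a))
   = (\<lambda>y. y + a) ` (interior (fst X) \<inter> interior (fst Y))"
  by (simp add: interior_tt image_Int inj_on_def)

lemma is_patch_pt: "is_patch P \<Longrightarrow> is_patch (patch_translate P a)"
  unfolding is_patch_def
proof (elim conjE, intro conjI ballI impI)
  assume A: "\<forall>T\<in>P. is_tile T" and B: "\<forall>T1\<in>P. \<forall>T2\<in>P. T1 \<noteq> T2 \<longrightarrow> interior (fst T1) \<inter> interior (fst T2) = {}"
  fix T assume "T \<in> patch_translate P a"
  then obtain T0 where "T0 \<in> P" "T = tile_translate T0 a" by (auto simp: patch_translate_def)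
  then show "is_tile T" using A is_tile_tt by blast
next
  assume B: "\<forall>T1\<in>P. \<forall>T2\<in>P. T1 \<noteq> T2 \<longrightarrow> interior (fst T1) \<inter> interior (fst T2) = {}"
  fix T1 T2 assume "T1 \<in> patch_translate P a" "T2 \<in> patch_translate P a" "T1 \<noteq> T2"
  then obtain S1 S2 where "S1 \<in> P" "S2 \<in> P" "T1 = tile_translate S1 a" "T2 = tile_translate S2 a"
    by (auto simp: patch_translate_def)
  with \<open>T1 \<noteq> T2\<close> B show "interior (fst T1) \<inter> interior (fst T2) = {}"
    by (metis (no_types, lifting) interior_tt_Int image_empty)
qed

lemma is_patch_subset: "is_patch P \<Longrightarrow> Q \<subseteq> P \<Longrightarrow> is_patch Q"
  unfolding is_patch_def by (meson subsetD)

lemma hull_local: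
  assumes "S \<in> hull_of T" "r > 0"
  shows "\<exists>w. \<forall>X. fst X \<inter> ball 0 r \<noteq> {} \<longrightarrow> (X \<in> S \<longleftrightarrow> tile_translate X (-w) \<in> T)"
proof -
  define e where "e = 1 / (r + 2)"
  have e0: "e > 0" using assms(2) by (simp add: e_def)
  have "sqrt 2 < 2" by (smt (verit) real_sqrt_less_iff real_sqrt_four)
  then have "sqrt 2 < r + 2" using assms(2) by linarith
  then have esq: "e < 1 / sqrt 2" unfolding e_def
    by (intro frac_less2) auto
  obtain x where rx: "rho S (patch_translate T x) < e"
    using assms(1) e0 unfolding hull_of_def by blast
  define E where "E = {e. 0 < e \<and> e < 1 / sqrt 2 \<and>
       (\<exists>x1 x2. norm x1 \<le> e \<and> norm x2 \<le> e \<and>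
          patch_restrict (patch_translate S x1) (ball 0 (1/e)) =
          patch_restrict (patch_translate (patch_translate T x) x2) (ball 0 (1/e)))}"
  have "Inf (E \<union> {1 / sqrt 2}) < e" using rx unfolding rho_def E_def by simp
  then obtain t where t: "t \<in> E \<union> {1 / sqrt 2}" "t < e"
    using cInf_lessD[of "E \<union> {1 / sqrt 2}" e] by blast
  then have "t \<in> E" using esq by auto
  then obtain x1 x2 where t0: "0 < t" and n1: "norm x1 \<le> t" and n2: "norm x2 \<le> t"
    and eq: "patch_restrict (patch_translate S x1) (ball 0 (1/t)) =
          patch_restrict (patch_translate (patch_translate T x) x2) (ball 0 (1/t))"
    unfolding E_def by blast
  have "1/e < 1/t" using t0 t(2) by (simp add: frac_less2)
  then have rt: "r + 2 < 1/t" by (simp add: e_def)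
  have te: "t < 1" using t(2) e0 assms(2) unfolding e_def by (smt (verit) divide_le_eq_1)
  show ?thesis
  proof (intro exI allI impI)
    fix X :: "('a, 'b) tile" assume "fst X \<inter> ball 0 r \<noteq> {}"
    then obtain q where q: "q \<in> fst X" "norm q < r" by auto
    have "norm (q + x1) \<le> norm q + norm x1" by (rule norm_triangle_ineq)
    then have "norm (q + x1) < 1/t" using q n1 te rt by linarith
    then have meet: "fst (tile_translate X x1) \<inter> ball 0 (1/t) \<noteq> {}"
      using q(1) by (auto simp: tt_fst)
    have "X \<in> S \<longleftrightarrow> tile_translate X x1 \<in> patch_restrict (patch_translate S x1) (ball 0 (1/t))"
      using meet by (simp add: patch_restrict_def tt_mem_pt)
    also have "\<dots> \<longleftrightarrow> tile_translate X x1 \<in> patch_translate T (x + x2)"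
      using meet eq by (simp add: patch_restrict_def pt_add)
    also have "\<dots> \<longleftrightarrow> tile_translate X (- (x + x2 - x1)) \<in> T"
      by (simp add: mem_pt tt_add algebra_simps)
    finally show "X \<in> S \<longleftrightarrow> tile_translate X (- (x + x2 - x1)) \<in> T" .
  qed
qed

lemma hull_disj:
  assumes "is_patch T" "S \<in> hull_of T" "X1 \<in> S" "X2 \<in> S"
    and "interior (fst X1) \<inter> interior (fst X2) \<noteq> {}"
  shows "X1 = X2"
proof -
  obtain q where q: "q \<in> interior (fst X1)" "q \<in> interior (fst X2)" using assms(5) by auto
  obtain w where w: "\<forall>X. fst X \<inter> ball 0 (norm q + 1) \<noteq> {} \<longrightarrow> (X \<in> S \<longleftrightarrow> tile_translate X (-w) \<in> T)"
    using hull_local[OF assms(2), of "norm q + 1"] by (smt (verit) norm_ge_zero)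
  have "q \<in> fst X1" "q \<in> fst X2" using q interior_subset by auto
  then have m: "fst X1 \<inter> ball 0 (norm q + 1) \<noteq> {}" "fst X2 \<inter> ball 0 (norm q + 1) \<noteq> {}"
    by auto
  have T1: "tile_translate X1 (-w) \<in> T" and T2: "tile_translate X2 (-w) \<in> T"
    using w[rule_format, OF m(1)] w[rule_format, OF m(2)] assms(3,4) by auto
  have "interior (fst (tile_translate X1 (-w))) \<inter> interior (fst (tile_translate X2 (-w))) \<noteq> {}"
    using assms(5) by (simp add: interior_tt_Int)
  then have "tile_translate X1 (-w) = tile_translate X2 (-w)"
    using assms(1) T1 T2 unfolding is_patch_def by blast
  then show ?thesis by (simp add: tt_inj)
qed

abbreviation lat :: "('n::finite \<Rightarrow> real^'n) \<Rightarrow> ('n \<Rightarrow> int) \<Rightarrow> real^'n" where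
  "lat b l \<equiv> (\<Sum>i\<in>UNIV. of_int (l i) *\<^sub>R b i)"

lemma lat_add: "lat b (\<lambda>i. k i + l i) = lat b k + lat b l"
  by (simp add: scaleR_add_left sum.distrib)

lemma lat_diff: "lat b (\<lambda>i. k i - l i) = lat b k - lat b l"
  by (simp add: scaleR_diff_left sum_subtractf)

lemma lat_zero: "lat b (\<lambda>i. 0) = 0"
  by simp

lemma basis_span:
  fixes b :: "'n::finite \<Rightarrow> real^'n"
  assumes "inj b" "span (range b) = UNIV"
  shows "\<exists>f. z = (\<Sum>i\<in>UNIV. f i *\<^sub>R b i)"
proof -
  have "z \<in> span (range b)" using assms by simp
  then obtain u where "z = (\<Sum>v\<in>range b. u v *\<^sub>R v)"
    using real_vector.span_finite[of "range b"] by auto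
  also have "\<dots> = (\<Sum>i\<in>UNIV. u (b i) *\<^sub>R b i)"
    using assms(1) by (simp add: sum.reindex)
  finally show ?thesis by (intro exI[of _ "\<lambda>i. u (b i)"])
qed

lemma basis_indep:
  fixes b :: "'n::finite \<Rightarrow> real^'n"
  assumes "independent (range b)" "inj b" "(\<Sum>i\<in>UNIV. f i *\<^sub>R b i) = 0"
  shows "f i = 0"
proof (rule ccontr)
  assume "f i \<noteq> 0"
  define u where "u v = f (inv b v)" for v
  have "(\<Sum>v\<in>range b. u v *\<^sub>R v) = (\<Sum>i\<in>UNIV. u (b i) *\<^sub>R b i)"
    using assms(2) by (simp add: sum.reindex)
  also have "\<dots> = 0" using assms(3) by (simp add: u_def inv_f_f[OF assms(2)])
  finally have sum0: "(\<Sum>v\<in>range b. u v *\<^sub>R v) = 0" .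
  have fin: "finite (range b)" by simp
  have ne: "\<exists>v\<in>range b. u v \<noteq> 0"
    using \<open>f i \<noteq> 0\<close> by (intro bexI[of _ "b i"]) (auto simp: u_def inv_f_f[OF assms(2)])
  have "dependent (range b)" using real_vector.dependent_finite[OF fin] ne sum0 by blast
  then show False using assms(1) by simp
qed

lemma basis_bound:
  fixes b :: "'n::finite \<Rightarrow> real^'n"
  assumes "independent (range b)" "inj b"
  shows "\<exists>\<kappa>>0. \<forall>f i. \<bar>f i\<bar> \<le> \<kappa> * norm (\<Sum>i\<in>UNIV. f i *\<^sub>R b i)"
proof -
  define L where "L c = (\<Sum>i\<in>UNIV. (c::real^'n) $ i *\<^sub>R b i)" for c
  have lin: "linear L"
    unfolding L_def by (rule linearI) (simp_all add: scaleR_add_left sum.distrib scaleR_right.sum)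
  have "inj L"
  proof (rule injI)
    fix x y assume "L x = L y"
    then have "(\<Sum>i\<in>UNIV. (x $ i - y $ i) *\<^sub>R b i) = 0"
      by (simp add: L_def scaleR_diff_left sum_subtractf)
    then have "x $ i - y $ i = 0" for i using basis_indep[OF assms, of "\<lambda>i. x $ i - y $ i" i] by simp
    then show "x = y" by (simp add: vec_eq_iff)
  qed
  then obtain B where B: "B > 0" "\<And>x. B * norm x \<le> norm (L x)"
    using linear_inj_bounded_below_pos[OF lin] by blast
  show ?thesis
  proof (intro exI conjI allI)
    show "1 / B > 0" using B by simp
    fix f :: "'n \<Rightarrow> real" and i
    have "\<bar>f i\<bar> = \<bar>(\<chi> j. f j) $ i\<bar>" by simp
    also have "\<dots> \<le> norm (\<chi> j. f j)" by (rule component_le_norm_cart)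
    also have "\<dots> \<le> norm (L (\<chi> j. f j)) / B" using B by (simp add: field_simps)
    also have "L (\<chi> j. f j) = (\<Sum>i\<in>UNIV. f i *\<^sub>R b i)" by (simp add: L_def)
    finally show "\<bar>f i\<bar> \<le> 1 / B * norm (\<Sum>i\<in>UNIV. f i *\<^sub>R b i)" by simp
  qed
qed

lemma mem_pt_ex: "X \<in> patch_translate P a \<longleftrightarrow> (\<exists>A\<in>P. X = tile_translate A a)"
  by (auto simp: patch_translate_def)

lemma mem_Upt: "X \<in> patch_translate (\<Union>l\<in>L. patch_translate P (f l)) y \<longleftrightarrow>
   (\<exists>l\<in>L. \<exists>A\<in>P. X = tile_translate A (f l + y))"
proof -
  have "patch_translate (\<Union>l\<in>L. patch_translate P (f l)) y = (\<Union>l\<in>L. patch_translate P (f l + y))"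
    by (simp add: patch_translate_def image_UN image_image tt_add)
  then show ?thesis by (simp add: mem_pt_ex)
qed

lemma tile_interior_ball:
  assumes "is_tile A"
  shows "\<exists>d>0. \<exists>m. ball m d \<subseteq> interior (fst A)"
proof -
  have "interior (fst A) \<noteq> {}"
    using assms unfolding is_tile_def by (metis closure_empty)
  then obtain m where "m \<in> interior (fst A)" by blast
  then show ?thesis using open_contains_ball[of "interior (fst A)"] by blast
qed

lemma uniform_ball:
  assumes "finite P" "\<forall>A\<in>P. is_tile A"
  shows "\<exists>d>0. \<forall>A\<in>P. \<exists>m. ball m d \<subseteq> interior (fst A)"
proof -
  have "\<forall>A\<in>P. \<exists>d. d > 0 \<and> (\<exists>m. ball m d \<subseteq> interior (fst A))"
    using assms(2) tile_interior_ball by blast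
  then obtain d where d: "\<forall>A\<in>P. d A > 0 \<and> (\<exists>m. ball m (d A) \<subseteq> interior (fst A))"
    by metis
  define \<delta> where "\<delta> = Min (insert 1 (d ` P))"
  have fin: "finite (insert 1 (d ` P))" using assms(1) by simp
  have "\<delta> > 0" unfolding \<delta>_def using fin d by (subst Min_gr_iff) auto
  moreover have "\<forall>A\<in>P. \<exists>m. ball m \<delta> \<subseteq> interior (fst A)"
  proof
    fix A assume "A \<in> P"
    then have "\<delta> \<le> d A" unfolding \<delta>_def using fin by (intro Min_le) auto
    then show "\<exists>m. ball m \<delta> \<subseteq> interior (fst A)"
      using d \<open>A \<in> P\<close> by (meson order_trans subset_ball)
  qed
  ultimately show ?thesis by blast
qed

lemma uniform_bound:
  assumes "finite P" "\<forall>A\<in>P. is_tile (A::('n::finite,'l) tile)"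
  shows "\<exists>M. \<forall>A\<in>P. \<forall>a\<in>fst A. norm a \<le> M"
proof -
  have "bounded (\<Union>A\<in>P. fst A)"
    using assms by (intro bounded_UN) (auto simp: is_tile_def compact_imp_bounded)
  then obtain M where "\<forall>x\<in>(\<Union>A\<in>P. fst A). norm x \<le> M" unfolding bounded_iff by blast
  then show ?thesis by blast
qed

lemma vec_id1: "g + x = (g - (p + (y - x))) + p + (y::'a::ab_group_add)"
  by (simp add: algebra_simps)

lemma vec_id2: "(y + p) - (a + q + y) = (p - q) - (a::'a::ab_group_add)"
  by (simp add: algebra_simps)

lemma vec_id3: "a + (p + (y - x)) + x = a + (p + (y::'a::ab_group_add))"
  by (simp add: algebra_simps)

lemma vec_norm: "norm (p::'a::real_normed_vector) \<le> norm (p - a) + norm a"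
  by (metis diff_add_cancel norm_triangle_ineq)

lemma vec_dist: "dist (m::'a::real_normed_vector) (g - (p + q)) = dist g (m + (p + q))"
  unfolding dist_norm by (metis (no_types, lifting) add_diff_cancel_right add_diff_eq diff_diff_eq2 norm_minus_commute)

lemma step2:
  fixes T :: "('n::finite, 'l) tile set" and P :: "('n, 'l) tile set" and b :: "'n \<Rightarrow> real^'n"
  assumes pT: "is_patch T" and cov: "supp T = UNIV" and rep: "repetitive T"
    and fP: "finite P" and tP: "\<forall>A\<in>P. is_tile A"
    and blocks: "\<And>n::nat. n > 0 \<Longrightarrow>
        legal T (\<Union>l\<in>{l::'n \<Rightarrow> int. \<forall>i. 1 \<le> l i \<and> l i \<le> int n}. patch_translate P (lat b l))"
    and kap: "\<And>k::'n\<Rightarrow>int. \<And>i. \<bar>real_of_int (k i)\<bar> \<le> \<kappa> * norm (lat b k)"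
    and kpos: "\<kappa> > 0"
  shows "\<exists>u. \<forall>X \<in> patch_translate (\<Union>l. patch_translate P (lat b l)) u.
            fst X \<inter> ball c r \<noteq> {} \<longrightarrow> X \<in> T"
proof -
  obtain \<delta> where d0: "\<delta> > 0" and dA: "\<forall>A\<in>P. \<exists>m. ball m \<delta> \<subseteq> interior (fst A)"
    using uniform_ball[OF fP tP] by blast
  obtain M where MA: "\<forall>A\<in>P. \<forall>a\<in>fst A. norm a \<le> M"
    using uniform_bound[OF fP tP] by blast
  define K where "K = cball c (r + 2 * M)"
  have "compact K" unfolding K_def by simp
  moreover have "K \<subseteq> (\<Union>q\<in>K. ball q \<delta>)" using d0 by auto
  ultimately obtain G where GK: "G \<subseteq> K" and fG: "finite G" and KG: "K \<subseteq> (\<Union>q\<in>G. ball q \<delta>)"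
    using compactE_image[of K K "\<lambda>q. ball q \<delta>"] by blast
  have "\<forall>g. \<exists>Y. Y \<in> T \<and> g \<in> fst Y" using cov unfolding supp_def by blast
  then obtain Y where Y: "\<And>g. Y g \<in> T" "\<And>g. g \<in> fst (Y g)" by metis
  define Pi where "Pi = Y ` G"
  have PiT: "Pi \<subseteq> T" using Y unfolding Pi_def by blast
  have "finite Pi" using fG unfolding Pi_def by simp
  moreover have "is_patch Pi" using is_patch_subset[OF pT PiT] .
  moreover have "legal T Pi" unfolding legal_def using PiT pt_0 by metis
  ultimately obtain R where R0: "R > 0" and RR: "\<And>c'. \<exists>x. patch_translate Pi x \<subseteq> T \<and>
       supp (patch_translate Pi x) \<subseteq> cball c' R"
    using rep unfolding repetitive_def by blast
  define N0 :: nat where "N0 = nat \<lceil>\<kappa> * (R + M)\<rceil> + 1"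
  have N0gt: "\<kappa> * (R + M) < real N0" unfolding N0_def by linarith
  define n where "n = 2 * N0"
  have "n > 0" unfolding n_def N0_def by simp
  define Qn where "Qn = (\<Union>l\<in>{l::'n \<Rightarrow> int. \<forall>i. 1 \<le> l i \<and> l i \<le> int n}. patch_translate P (lat b l))"
  obtain y where y: "patch_translate Qn y \<subseteq> T"
    using blocks[OF \<open>n > 0\<close>] unfolding legal_def Qn_def by blast
  define c' where "c' = y + lat b (\<lambda>i. int N0)"
  obtain x where xT: "patch_translate Pi x \<subseteq> T" and xS: "supp (patch_translate Pi x) \<subseteq> cball c' R"
    using RR by blast
  show ?thesis
  proof (intro exI ballI impI)
    fix X assume XU: "X \<in> patch_translate (\<Union>l. patch_translate P (lat b l)) (y - x)"
      and Xm: "fst X \<inter> ball c r \<noteq> {}"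
    from XU obtain l A where AP: "A \<in> P" and XA: "X = tile_translate A (lat b l + (y - x))"
      unfolding mem_Upt by blast
    from Xm obtain a where aA: "a \<in> fst A" and ab: "a + (lat b l + (y - x)) \<in> ball c r"
      unfolding XA tt_fst by auto
    obtain m where mb: "ball m \<delta> \<subseteq> interior (fst A)" using dA AP by blast
    have "m \<in> fst A" using mb d0 interior_subset by (metis centre_in_ball subsetD)
    then have nm: "norm m \<le> M" and na: "norm a \<le> M" using MA AP aA by auto
    define pm where "pm = m + (lat b l + (y - x))"
    have "dist c pm \<le> dist c (a + (lat b l + (y - x))) + dist (a + (lat b l + (y - x))) pm"
      by (rule dist_triangle)
    also have "dist (a + (lat b l + (y - x))) pm = norm (a - m)"
      unfolding pm_def dist_norm by (simp add: algebra_simps)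
    also have "norm (a - m) \<le> norm a + norm m" by (rule norm_triangle_ineq4)
    finally have "dist c pm \<le> r + 2 * M" using ab nm na by (simp add: dist_commute)
    then have "pm \<in> K" unfolding K_def by simp
    then obtain g where gG: "g \<in> G" and gpm: "pm \<in> ball g \<delta>" using KG by blast
    define a' where "a' = g - (lat b l + (y - x))"
    have "dist m a' = dist g pm" unfolding a'_def pm_def by (rule vec_dist)
    then have "a' \<in> ball m \<delta>" using gpm by (simp add: dist_commute)
    then have a'int: "a' \<in> interior (fst A)" using mb by blast
    then have a'A: "a' \<in> fst A" using interior_subset by blast
    have gX: "g \<in> interior (fst X)" unfolding XA interior_tt using a'int
      by (intro image_eqI[of _ _ a']) (simp_all add: a'_def)
    have YgPi: "Y g \<in> Pi" using gG unfolding Pi_def by blast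
    have "g + x \<in> fst (tile_translate (Y g) x)" using Y(2) by (simp add: tt_fst)
    moreover have "tile_translate (Y g) x \<in> patch_translate Pi x" using YgPi by (simp add: tt_mem_pt)
    ultimately have "g + x \<in> supp (patch_translate Pi x)" unfolding supp_def by blast
    then have "g + x \<in> cball c' R" using xS by blast
    moreover have "g + x = a' + lat b l + y" unfolding a'_def by (rule vec_id1)
    ultimately have "norm (c' - (a' + lat b l + y)) \<le> R" by (simp add: dist_norm)
    moreover have "c' - (a' + lat b l + y) = lat b (\<lambda>i. int N0 - l i) - a'"
      unfolding c'_def lat_diff by (rule vec_id2)
    ultimately have "norm (lat b (\<lambda>i. int N0 - l i) - a') \<le> R" by simp
    moreover have "norm (lat b (\<lambda>i. int N0 - l i)) \<le> norm (lat b (\<lambda>i. int N0 - l i) - a') + norm a'"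
      by (rule vec_norm)
    moreover have "norm a' \<le> M" using MA AP a'A by auto
    ultimately have nl: "norm (lat b (\<lambda>i. int N0 - l i)) \<le> R + M" by linarith
    have lrange: "1 \<le> l i \<and> l i \<le> int n" for i
    proof -
      have "\<bar>real_of_int (int N0 - l i)\<bar> \<le> \<kappa> * norm (lat b (\<lambda>i. int N0 - l i))"
        using kap[of "\<lambda>i. int N0 - l i" i] by simp
      also have "\<dots> \<le> \<kappa> * (R + M)" using nl kpos by (simp add: mult_left_mono)
      finally have "\<bar>real_of_int (int N0 - l i)\<bar> < real N0" using N0gt by linarith
      then have "\<bar>int N0 - l i\<bar> < int N0" by linarith
      then show ?thesis unfolding n_def by linarith
    qed
    have "tile_translate X x = tile_translate A (lat b l + y)"
      unfolding XA tt_add by (simp only: add.assoc diff_add_cancel)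
    moreover have "tile_translate A (lat b l + y) \<in> patch_translate Qn y"
      unfolding Qn_def mem_Upt using lrange AP by blast
    ultimately have XxT: "tile_translate X x \<in> T"
      using y by auto
    have YxT: "tile_translate (Y g) x \<in> T"
      using xT YgPi by (auto simp: tt_mem_pt)
    have "is_tile (Y g)" using pT Y(1) unfolding is_patch_def by blast
    then have "g \<in> closure (interior (fst (Y g)))" using Y(2) unfolding is_tile_def by simp
    then have "interior (fst X) \<inter> interior (fst (Y g)) \<noteq> {}"
      using gX open_Int_closure_eq_empty[of "interior (fst X)" "interior (fst (Y g))"] by blast
    then have "interior (fst (tile_translate X x)) \<inter> interior (fst (tile_translate (Y g) x)) \<noteq> {}"
      by (simp add: interior_tt_Int)
    then have "tile_translate X x = tile_translate (Y g) x"
      using pT XxT YxT unfolding is_patch_def by blast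
    then have "X = Y g" by (simp add: tt_inj)
    then show "X \<in> T" using Y(1) by simp
  qed
qed

lemma transl_cancel:
  assumes "compact A" "A \<noteq> {}" "(\<lambda>y. y + a) ` A = (\<lambda>y. y + c) ` (A::(real^'n::finite) set)"
  shows "a = c"
proof -
  define t where "t = a - c"
  have "continuous_on A (\<lambda>y. y \<bullet> t)" by (intro continuous_intros)
  then obtain p where pA: "p \<in> A" and pm: "\<forall>y\<in>A. y \<bullet> t \<le> p \<bullet> t"
    using continuous_attains_sup[OF assms(1,2)] by blast
  have "p + a \<in> (\<lambda>y. y + c) ` A" using assms(3) pA by blast
  then obtain p' where p'A: "p' \<in> A" and pp: "p + a = p' + c" by blast
  have "p' = p + t" using pp unfolding t_def by (simp add: algebra_simps)
  then have "(p + t) \<bullet> t \<le> p \<bullet> t" using pm p'A by blast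
  then have "t \<bullet> t \<le> 0" by (simp add: inner_add_left)
  then have "t = 0" by (meson antisym inner_ge_zero inner_eq_zero_iff)
  then show ?thesis unfolding t_def by simp
qed

lemma hull_self: "\<T> \<in> hull_of \<T>"
  unfolding hull_of_def
proof (intro CollectI allI impI exI)
  fix e :: real assume e0: "e > 0"
  define E where "E = {e. 0 < e \<and> e < 1 / sqrt 2 \<and>
       (\<exists>x1 x2. norm x1 \<le> e \<and> norm x2 \<le> e \<and>
          patch_restrict (patch_translate \<T> x1) (ball 0 (1/e)) =
          patch_restrict (patch_translate (patch_translate \<T> 0) x2) (ball 0 (1/e)))}"
  define e' where "e' = min (e/2) (1/2)"
  have "sqrt 2 < 2" by (smt (verit) real_sqrt_less_iff real_sqrt_four)
  then have h: "1/2 < 1 / sqrt 2" by (intro frac_less2) auto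
  have "e' < 1 / sqrt 2" unfolding e'_def using h by linarith
  then have "e' \<in> E" unfolding E_def using e0 unfolding e'_def
    by (auto intro!: exI[of _ 0] simp: pt_0)
  moreover have "bdd_below (E \<union> {1 / sqrt 2})"
    unfolding E_def by (rule bdd_belowI[of _ 0]) auto
  ultimately have "Inf (E \<union> {1 / sqrt 2}) \<le> e'" by (intro cInf_lower) auto
  also have "e' < e" unfolding e'_def using e0 by simp
  finally show "rho \<T> (patch_translate \<T> 0) < e" unfolding rho_def E_def .
qed

lemma dir21:
  fixes \<T> :: "('n::finite, 'l) tile set"
  assumes "is_tiling \<T>" and H: "\<forall>S\<in>hull_of \<T>. legal S (\<Union>l::'n \<Rightarrow> int. patch_translate P (lat b l))"
    and "n > (0::nat)"
  shows "is_patch (\<Union>l\<in>{l::'n \<Rightarrow> int. \<forall>i. 1 \<le> l i \<and> l i \<le> int n}. patch_translate P (lat b l))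
     \<and> legal \<T> (\<Union>l\<in>{l::'n \<Rightarrow> int. \<forall>i. 1 \<le> l i \<and> l i \<le> int n}. patch_translate P (lat b l))"
    (is "is_patch ?Q \<and> legal \<T> ?Q")
proof -
  obtain y where y: "patch_translate (\<Union>l::'n \<Rightarrow> int. patch_translate P (lat b l)) y \<subseteq> \<T>"
    using H hull_self unfolding legal_def by blast
  have "?Q \<subseteq> (\<Union>l::'n \<Rightarrow> int. patch_translate P (lat b l))" by blast
  then have Qy: "patch_translate ?Q y \<subseteq> \<T>" using y unfolding patch_translate_def by blast
  then have "legal \<T> ?Q" unfolding legal_def by blast
  moreover have "is_patch (patch_translate ?Q y)"
    using Qy assms(1) is_patch_subset unfolding is_tiling_def by blast
  then have "is_patch (patch_translate (patch_translate ?Q y) (-y))" by (rule is_patch_pt)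
  then have "is_patch ?Q" by (simp add: pt_add pt_0)
  ultimately show ?thesis by blast
qed

lemma dir12:
  fixes \<T> :: "('n::finite, 'l) tile set" and P :: "('n, 'l) tile set" and b :: "'n \<Rightarrow> real^'n"
  assumes tT: "is_tiling \<T>" and rep: "repetitive \<T>"
    and fP: "finite P" and neP: "P \<noteq> {}" and pP: "is_patch P"
    and ind: "independent (range b)" and ib: "inj b" and sp: "span (range b) = UNIV"
    and blocks: "\<And>n::nat. n > 0 \<Longrightarrow>
        legal \<T> (\<Union>l\<in>{l::'n \<Rightarrow> int. \<forall>i. 1 \<le> l i \<and> l i \<le> int n}. patch_translate P (lat b l))"
    and SH: "S \<in> hull_of \<T>"
  shows "legal S (\<Union>l::'n \<Rightarrow> int. patch_translate P (lat b l))"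
proof -
  define U where "U = (\<Union>l::'n \<Rightarrow> int. patch_translate P (lat b l))"
  have pT: "is_patch \<T>" and cov: "supp \<T> = UNIV" using tT unfolding is_tiling_def by auto
  have tP: "\<forall>A\<in>P. is_tile A" using pP unfolding is_patch_def by blast
  obtain \<kappa> where kpos: "\<kappa> > 0" and kf: "\<forall>f i. \<bar>f i\<bar> \<le> \<kappa> * norm (\<Sum>i\<in>UNIV. f i *\<^sub>R b i)"
    using basis_bound[OF ind ib] by blast
  have kap: "\<bar>real_of_int (k i)\<bar> \<le> \<kappa> * norm (lat b k)" for k :: "'n \<Rightarrow> int" and i
    using kf[rule_format, of "\<lambda>i. real_of_int (k i)" i] by simp
  define L where "L c = (\<Sum>i\<in>UNIV. (c::real^'n) $ i *\<^sub>R b i)" for c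
  define D where "D = L ` cbox 0 (\<chi> i. 1)"
  have "continuous_on (cbox 0 (\<chi> i. 1)) L" unfolding L_def by (intro continuous_intros)
  then have cD: "compact D" unfolding D_def by (intro compact_continuous_image) auto
  then obtain BD where BD: "\<forall>z\<in>D. norm z \<le> BD" using compact_imp_bounded bounded_iff by metis
  have hz: "\<exists>z\<in>D. \<forall>X\<in>patch_translate U z. fst X \<inter> ball 0 (real m + 1) \<noteq> {} \<longrightarrow> X \<in> S"
    for m :: nat
  proof -
    define r where "r = real m + 1"
    have r0: "r > 0" unfolding r_def by simp
    obtain w where w: "\<forall>X. fst X \<inter> ball 0 r \<noteq> {} \<longrightarrow> (X \<in> S \<longleftrightarrow> tile_translate X (-w) \<in> \<T>)"
      using hull_local[OF SH r0] by blast
    obtain u where u: "\<forall>X \<in> patch_translate U u. fst X \<inter> ball (-w) r \<noteq> {} \<longrightarrow> X \<in> \<T>"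
      using step2[OF pT cov rep fP tP blocks kap kpos, of "-w" r] unfolding U_def by blast
    define z0 where "z0 = u + w"
    have z0S: "X \<in> S" if XU: "X \<in> patch_translate U z0" and Xm: "fst X \<inter> ball 0 r \<noteq> {}" for X
    proof -
      have "tile_translate X (-w) \<in> patch_translate U u"
        using XU unfolding mem_pt z0_def by (simp add: tt_add algebra_simps)
      moreover have "fst (tile_translate X (-w)) \<inter> ball (-w) r \<noteq> {}"
      proof -
        obtain q where "q \<in> fst X" "q \<in> ball 0 r" using Xm by blast
        then have "q + (-w) \<in> fst (tile_translate X (-w)) \<inter> ball (-w) r"
          by (auto simp: tt_fst dist_norm)
        then show ?thesis by blast
      qed
      ultimately have "tile_translate X (-w) \<in> \<T>" using u by blast
      then show "X \<in> S" using w Xm by blast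
    qed
    obtain f where f: "z0 = (\<Sum>i\<in>UNIV. f i *\<^sub>R b i)" using basis_span[OF ib sp] by blast
    define k where "k i = \<lfloor>f i\<rfloor>" for i
    define z where "z = L (\<chi> i. f i - of_int (k i))"
    have "(\<chi> i. f i - of_int (k i)) \<in> cbox 0 (\<chi> i. 1)"
      unfolding k_def mem_box_cart
    proof (intro allI conjI)
      fix i
      have "real_of_int \<lfloor>f i\<rfloor> \<le> f i" "f i < real_of_int \<lfloor>f i\<rfloor> + 1"
        using floor_correct[of "f i"] unfolding of_int_add of_int_1 by auto
      then show "(0::real^'n) $ i \<le> (\<chi> i. f i - real_of_int \<lfloor>f i\<rfloor>) $ i"
        "(\<chi> i. f i - real_of_int \<lfloor>f i\<rfloor>) $ i \<le> (\<chi> i. (1::real)) $ i" by simp_all linarith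
    qed
    then have zD: "z \<in> D" unfolding z_def D_def by blast
    have z0z: "z0 = lat b k + z"
      unfolding f z_def L_def by (simp add: scaleR_diff_left sum_subtractf)
    show ?thesis
    proof (intro bexI[OF _ zD] ballI impI)
      fix X assume XU: "X \<in> patch_translate U z" and Xm: "fst X \<inter> ball 0 (real m + 1) \<noteq> {}"
      from XU obtain l A where AP: "A \<in> P" and XA: "X = tile_translate A (lat b l + z)"
        unfolding U_def mem_Upt by blast
      have eq: "lat b l + z = lat b (\<lambda>i. l i - k i) + z0"
        unfolding z0z lat_diff by (simp add: algebra_simps)
      have "X \<in> patch_translate U z0"
        unfolding U_def mem_Upt XA using AP eq
        by (intro bexI[of _ "\<lambda>i. l i - k i"] bexI[of _ A]) simp_all
      then show "X \<in> S" using z0S Xm unfolding r_def by blast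
    qed
  qed
  then obtain zs where zsD: "\<And>m. zs m \<in> D"
    and zsS: "\<And>m X. X \<in> patch_translate U (zs m) \<Longrightarrow> fst X \<inter> ball 0 (real m + 1) \<noteq> {} \<Longrightarrow> X \<in> S"
    by metis
  obtain lim rr where "lim \<in> D" and smr: "strict_mono rr" and conv: "(zs \<circ> rr) \<longlonglongrightarrow> lim"
    using compact_imp_seq_compact[OF cD] zsD unfolding seq_compact_def by metis
  have cau: "Cauchy (zs \<circ> rr)" using conv by (rule LIMSEQ_imp_Cauchy)
  obtain A0 where A0P: "A0 \<in> P" using neP by blast
  obtain \<delta> m0 where d0: "\<delta> > 0" and mb: "ball m0 \<delta> \<subseteq> interior (fst A0)"
    using tile_interior_ball tP A0P by blast
  have m0A: "m0 \<in> fst A0" using mb d0 interior_subset by (metis centre_in_ball subsetD)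
  obtain M where MA: "\<forall>A\<in>P. \<forall>a\<in>fst A. norm a \<le> M"
    using uniform_bound[OF fP tP] by blast
  obtain N1 where N1: "\<forall>m\<ge>N1. \<forall>n\<ge>N1. norm ((zs \<circ> rr) m - (zs \<circ> rr) n) < \<delta>"
    using CauchyD[OF cau d0] by blast
  define K0 where "K0 = max N1 (nat \<lceil>BD + M\<rceil>)"
  have A0S: "tile_translate A0 (zs (rr k)) \<in> S" if "k \<ge> K0" for k
  proof -
    have "tile_translate A0 (zs (rr k)) \<in> patch_translate U (zs (rr k))"
      unfolding U_def mem_Upt using A0P
      by (intro bexI[of _ "\<lambda>i. 0"] bexI[of _ A0]) (simp_all add: lat_zero)
    moreover have mi: "m0 + zs (rr k) \<in> fst (tile_translate A0 (zs (rr k)))"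
      using m0A by (simp add: tt_fst)
    moreover have nm: "norm (m0 + zs (rr k)) < real (rr k) + 1"
    proof -
      have "norm (m0 + zs (rr k)) \<le> norm m0 + norm (zs (rr k))" by (rule norm_triangle_ineq)
      also have "\<dots> \<le> M + BD" using MA A0P m0A BD zsD by (meson add_mono)
      also have "\<dots> \<le> real K0" unfolding K0_def by linarith
      also have "\<dots> \<le> real (rr k)" using seq_suble[OF smr, of k] that by simp
      finally show ?thesis by simp
    qed
    moreover have "m0 + zs (rr k) \<in> ball 0 (real (rr k) + 1)" using nm by simp
    ultimately have "fst (tile_translate A0 (zs (rr k))) \<inter> ball 0 (real (rr k) + 1) \<noteq> {}"
      "tile_translate A0 (zs (rr k)) \<in> patch_translate U (zs (rr k))"
      by blast+
    then show ?thesis using zsS by blast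
  qed
  have const: "zs (rr k) = zs (rr K0)" if "k \<ge> K0" for k
  proof -
    define z1 where "z1 = zs (rr k)"
    define z2 where "z2 = zs (rr K0)"
    have nz: "norm (z1 - z2) < \<delta>" using N1 that unfolding z1_def z2_def K0_def by simp
    have S1: "tile_translate A0 z1 \<in> S" using A0S that unfolding z1_def by blast
    have S2: "tile_translate A0 z2 \<in> S" using A0S unfolding z2_def by blast
    have "m0 \<in> interior (fst A0)" using mb d0 by auto
    then have i1: "m0 + z1 \<in> interior (fst (tile_translate A0 z1))" by (simp add: interior_tt)
    have "m0 + (z1 - z2) \<in> ball m0 \<delta>" using nz by (simp add: dist_norm norm_minus_commute)
    then have "m0 + (z1 - z2) \<in> interior (fst A0)" using mb by blast
    then have i2: "m0 + z1 \<in> interior (fst (tile_translate A0 z2))" unfolding interior_tt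
      by (intro image_eqI[of _ _ "m0 + (z1 - z2)"]) (simp_all add: algebra_simps)
    have "tile_translate A0 z1 = tile_translate A0 z2"
      using hull_disj[OF pT SH S1 S2] i1 i2 by blast
    then have "(\<lambda>y. y + z1) ` fst A0 = (\<lambda>y. y + z2) ` fst A0"
      by (metis tt_fst)
    moreover have "compact (fst A0)" "fst A0 \<noteq> {}" using tP A0P unfolding is_tile_def by auto
    ultimately have "z1 = z2" using transl_cancel by blast
    then show ?thesis unfolding z1_def z2_def .
  qed
  show ?thesis
    unfolding legal_def U_def[symmetric]
  proof (intro exI subsetI)
    fix X assume XU: "X \<in> patch_translate U (zs (rr K0))"
    from XU obtain l A where AP: "A \<in> P" and XA: "X = tile_translate A (lat b l + zs (rr K0))"
      unfolding U_def mem_Upt by blast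
    have "fst A \<noteq> {}" using tP AP unfolding is_tile_def by auto
    then obtain a where aA: "a \<in> fst A" by blast
    define q where "q = a + (lat b l + zs (rr K0))"
    have qX: "q \<in> fst X" unfolding XA q_def tt_fst using aA by blast
    define k where "k = max K0 (nat \<lceil>norm q\<rceil>)"
    have kK: "k \<ge> K0" unfolding k_def by simp
    have "norm q \<le> real k" unfolding k_def by linarith
    also have "\<dots> \<le> real (rr k)" using seq_suble[OF smr, of k] by simp
    finally have "q \<in> ball 0 (real (rr k) + 1)" by simp
    then have Xm: "fst X \<inter> ball 0 (real (rr k) + 1) \<noteq> {}" using qX by blast
    have "X \<in> patch_translate U (zs (rr k))" using XU const[OF kK] by simp
    then show "X \<in> S" using zsS Xm by blast
  qed
qed

theorem lemma2p5:
  fixes \<T> :: "('n::finite, 'l) tile set"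
    and P :: "('n, 'l) tile set"
    and b :: "'n \<Rightarrow> real^'n"
  assumes "is_tiling \<T>" and "finite_local_complexity \<T>" and "repetitive \<T>"
    and "finite P" and "P \<noteq> {}" and "is_patch P" and "legal \<T> P"
    and "independent (range b)" and "inj b" and "span (range b) = UNIV"
  shows "(\<forall>n::nat. n > 0 \<longrightarrow>
            (let Q = (\<Union>l\<in>{l::'n \<Rightarrow> int. \<forall>i. 1 \<le> l i \<and> l i \<le> int n}.
                        patch_translate P (\<Sum>i\<in>UNIV. of_int (l i) *\<^sub>R b i))
             in is_patch Q \<and> legal \<T> Q))
     \<longleftrightarrow>
         (\<forall>S\<in>hull_of \<T>. legal S (\<Union>l::'n \<Rightarrow> int.
                        patch_translate P (\<Sum>i\<in>UNIV. of_int (l i) *\<^sub>R b i)))"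
  unfolding Let_def
proof (intro iffI ballI allI impI)
  fix S assume H: "\<forall>n::nat. n > 0 \<longrightarrow>
      is_patch (\<Union>l\<in>{l::'n \<Rightarrow> int. \<forall>i. 1 \<le> l i \<and> l i \<le> int n}. patch_translate P (lat b l)) \<and>
      legal \<T> (\<Union>l\<in>{l::'n \<Rightarrow> int. \<forall>i. 1 \<le> l i \<and> l i \<le> int n}. patch_translate P (lat b l))"
    and SH: "S \<in> hull_of \<T>"
  show "legal S (\<Union>l::'n \<Rightarrow> int. patch_translate P (lat b l))"
    using dir12[OF assms(1,3,4,5,6,8,9,10) _ SH] H by blast
next
  fix n :: nat
  assume "\<forall>S\<in>hull_of \<T>. legal S (\<Union>l::'n \<Rightarrow> int. patch_translate P (lat b l))" and "n > 0"
  then show "is_patch (\<Union>l\<in>{l::'n \<Rightarrow> int. \<forall>i. 1 \<le> l i \<and> l i \<le> int n}. patch_translate P (lat b l)) \<and>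
      legal \<T> (\<Union>l\<in>{l::'n \<Rightarrow> int. \<forall>i. 1 \<le> l i \<and> l i \<le> int n}. patch_translate P (lat b l))"
    using dir21[OF assms(1)] by blast
qed

end
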